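(* Let $O$ be a validated totally-ordered object, $S$ a sequence of operations, $i\neq j$ processes, and $op_i, op_j\notin S$ operations issued by $i$ and $j$ respectively, such that $\mathrm{valid}(S,op_i,i)=\mathit{True}$, $\mathrm{valid}(S,op_j,j)=\mathit{True}$, $\mathrm{valid}(S\|op_j,op_i,i)=\mathit{False}$ and $\mathrm{valid}(S\|op_i,op_j,j)=\mathit{False}$. Then, in an asynchronous system in which at most one of $i,j$ crashes, the following algorithm solves consensus between $i$ and $j$ (every correct one of them decides, both decide the same value, and the decided value was proposed by $i$ or $j$). The object $O$ is initialized with state $S$; $c_i,c_j$ are reliable atomic SWMR registers, written only by $i$ resp. $j$, initially $\bot$. Process $i$, proposing $v_i$: writes $v_i$ to $c_i$; calls $r\leftarrow O.\mathrm{apply}(op_i,i)$; if $r=(\mathit{NACK},-)$ it reads $v_j$ from $c_j$ and decides it, otherwise it decides $v_i$. Process $j$ executes the symmetric code with $v_j$, $c_j$, $op_j$ and reading $c_i$.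
   Context: Validated object: given a predicate $\mathrm{valid}(\cdot, op, i)$ and function $\mathrm{execute}(\cdot, op, i)$, first argument a strictly partially ordered set of operations (a sequence when totally ordered), $op$ an operation, $i$ its issuer. Clients use $\mathrm{apply}(op,i)$, returning $(\mathit{ACK}, r)$ if $op$ is found valid and executed with result $r$, and $(\mathit{NACK},-)$ otherwise. For a sequence $S$, $S\|op$ denotes $S$ followed by $op$. The history of a run contains only operations for which $\mathrm{apply}$ returns $\mathit{ACK}$; $C(R)$ is the set of complete such operations; $op\rightarrow op'$ means the response of $op$ precedes the invocation of $op'$. Validated totally-ordered object: in every run $R$ there is a total order $\ll$ on $C(R)$ such that (1) $op\rightarrow op'$ implies $op\ll op'$; (2) for every $op\in C(R)$ issued by $i$, with $P(op)=\{op'\in C(R): op'\ll op\}$, $\mathrm{valid}(\langle P(op),\ll\rangle,op,i)=\mathit{True}$ and $op$ returns $\mathrm{execute}(\langle P(op),\ll\rangle,op,i)$. The object $O$ is assumed reliable (it never fails). *)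

theory Defs
  imports Main
begin

text \<open>
The object O is modelled as a linearizable object: apply(op,p) consists of an invocation
step, a linearization step (the point at which op is placed in the total order; it is
ACKed and appended to the order iff it is valid w.r.t. S followed by the operations
ordered before it, otherwise NACKed), and a response step.
\<close>

datatype 'r resp = ACK 'r | NACK

record ('p, 'v, 'o, 'r) cstate =
  pc  :: "'p \<Rightarrow> nat"
  reg :: "'p \<Rightarrow> 'v option"       \<comment> \<open>register c_p; None is bottom\<close>
  ost :: "'o list"               \<comment> \<open>S followed by the operations linearized and ACKed so far\<close>
  res :: "'p \<Rightarrow> 'r resp option"
  dec :: "'p \<Rightarrow> 'v option option" \<comment> \<open>None: undecided; Some d: decided d (d may be bottom)\<close>

definition init_state :: "'o list \<Rightarrow> ('p, 'v, 'o, 'r) cstate" where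
  "init_state S = \<lparr> pc = (\<lambda>_. 0), reg = (\<lambda>_. None), ost = S,
                    res = (\<lambda>_. None), dec = (\<lambda>_. None) \<rparr>"

definition other :: "'p \<Rightarrow> 'p \<Rightarrow> 'p \<Rightarrow> 'p" where
  "other i j p = (if p = i then j else i)"

text \<open>One atomic step of process p (steps of processes other than i, j do nothing).
 pc 0: write own proposal into own register;
 pc 1: invoke O.apply(op_p, p);
 pc 2: linearization point of the apply call inside O;
 pc 3: response of apply; on ACK decide own proposal, on NACK continue;
 pc 4: read the other register and decide the value read;
 pc 5: done.\<close>
definition alg_step ::
  "('o list \<Rightarrow> 'o \<Rightarrow> 'p \<Rightarrow> bool) \<Rightarrow> ('o list \<Rightarrow> 'o \<Rightarrow> 'p \<Rightarrow> 'r) \<Rightarrow> 'p \<Rightarrow> 'p \<Rightarrow>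
   ('p \<Rightarrow> 'v) \<Rightarrow> ('p \<Rightarrow> 'o) \<Rightarrow> 'p \<Rightarrow> ('p, 'v, 'o, 'r) cstate \<Rightarrow> ('p, 'v, 'o, 'r) cstate" where
  "alg_step valid exec i j vp opr p s =
    (if p \<noteq> i \<and> p \<noteq> j then s else
     (case pc s p of
        0 \<Rightarrow> s\<lparr> reg := (reg s)(p := Some (vp p)), pc := (pc s)(p := 1) \<rparr>
      | Suc 0 \<Rightarrow> s\<lparr> pc := (pc s)(p := 2) \<rparr>
      | Suc (Suc 0) \<Rightarrow>
          (if valid (ost s) (opr p) p
           then s\<lparr> ost := ost s @ [opr p],
                   res := (res s)(p := Some (ACK (exec (ost s) (opr p) p))),
                   pc := (pc s)(p := 3) \<rparr>
           else s\<lparr> res := (res s)(p := Some NACK), pc := (pc s)(p := 3) \<rparr>)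
      | Suc (Suc (Suc 0)) \<Rightarrow>
          (case res s p of
             Some (ACK r) \<Rightarrow> s\<lparr> dec := (dec s)(p := Some (Some (vp p))), pc := (pc s)(p := 5) \<rparr>
           | _ \<Rightarrow> s\<lparr> pc := (pc s)(p := 4) \<rparr>)
      | Suc (Suc (Suc (Suc 0))) \<Rightarrow>
          s\<lparr> dec := (dec s)(p := Some (reg s (other i j p))), pc := (pc s)(p := 5) \<rparr>
      | _ \<Rightarrow> s))"

definition is_run ::
  "('o list \<Rightarrow> 'o \<Rightarrow> 'p \<Rightarrow> bool) \<Rightarrow> ('o list \<Rightarrow> 'o \<Rightarrow> 'p \<Rightarrow> 'r) \<Rightarrow> 'o list \<Rightarrow> 'p \<Rightarrow> 'p \<Rightarrow>
   ('p \<Rightarrow> 'v) \<Rightarrow> ('p \<Rightarrow> 'o) \<Rightarrow> (nat \<Rightarrow> 'p) \<Rightarrow> (nat \<Rightarrow> ('p, 'v, 'o, 'r) cstate) \<Rightarrow> bool" where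
  "is_run valid exec S i j vp opr sch \<sigma> \<longleftrightarrow>
     \<sigma> 0 = init_state S \<and>
     (\<forall>n. \<sigma> (Suc n) = alg_step valid exec i j vp opr (sch n) (\<sigma> n))"

text \<open>A process is correct in a run iff it takes infinitely many steps; otherwise it crashed.\<close>
definition correct :: "(nat \<Rightarrow> 'p) \<Rightarrow> 'p \<Rightarrow> bool" where
  "correct sch p \<longleftrightarrow> infinite {n. sch n = p}"

end

theory Submission
  imports Defs
begin

context
  fixes valid :: "'o list \<Rightarrow> 'o \<Rightarrow> 'p \<Rightarrow> bool"
    and exec :: "'o list \<Rightarrow> 'o \<Rightarrow> 'p \<Rightarrow> 'r"
    and S :: "'o list" and i j :: 'p
    and opr :: "'p \<Rightarrow> 'o" and vp :: "'p \<Rightarrow> 'v"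
  assumes ij: "i \<noteq> j"
    and vi: "valid S (opr i) i" and vj: "valid S (opr j) j"
    and ni: "\<not> valid (S @ [opr j]) (opr i) i"
    and nj: "\<not> valid (S @ [opr i]) (opr j) j"
begin

definition P :: "('p, 'v, 'o, 'r) cstate \<Rightarrow> 'p \<Rightarrow> 'p \<Rightarrow> bool" where
 "P s p q \<longleftrightarrow> pc s p \<le> 5 \<and> (pc s p \<ge> 1 \<longrightarrow> reg s p = Some (vp p)) \<and>
   (res s p = None \<longleftrightarrow> pc s p \<le> 2) \<and> (pc s p = 4 \<longrightarrow> res s p = Some NACK) \<and>
   (dec s p = None \<longleftrightarrow> pc s p < 5) \<and>
   (\<forall>d. dec s p = Some d \<longrightarrow> (\<forall>r. res s p = Some (ACK r) \<longrightarrow> d = Some (vp p))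
      \<and> (res s p = Some NACK \<longrightarrow> d = Some (vp q)))"

definition W :: "('p, 'v, 'o, 'r) cstate \<Rightarrow> 'p \<Rightarrow> 'p \<Rightarrow> bool" where
 "W s w q \<longleftrightarrow> ost s = S@[opr w] \<and> pc s w \<ge> 3 \<and> (\<exists>r. res s w = Some (ACK r)) \<and>
     (pc s q \<ge> 3 \<longrightarrow> res s q = Some NACK)"

definition Inv :: "('p, 'v, 'o, 'r) cstate \<Rightarrow> bool" where
 "Inv s \<longleftrightarrow> P s i j \<and> P s j i \<and>
   ((ost s = S \<and> pc s i \<le> 2 \<and> pc s j \<le> 2) \<or> W s i j \<or> W s j i)"

lemma Inv_init: "Inv (init_state S)"
  by (simp add: Inv_def P_def init_state_def)

lemma step_gen:
  assumes ij': "p \<noteq> q" and v: "valid S (opr p) p" and n: "\<not> valid (S @ [opr q]) (opr p) p"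
    and oth: "other i j p = q"
    and I1: "P s p q" and I2: "P s q p"
    and G: "(ost s = S \<and> pc s p \<le> 2 \<and> pc s q \<le> 2) \<or> W s p q \<or> W s q p"
    and pij: "p = i \<or> p = j"
  defines "s' \<equiv> alg_step valid exec i j vp opr p s"
  shows "P s' p q \<and> P s' q p \<and> ((ost s' = S \<and> pc s' p \<le> 2 \<and> pc s' q \<le> 2) \<or> W s' p q \<or> W s' q p)"
proof -
  have pn: "(p \<noteq> i \<and> p \<noteq> j) = False" using pij by auto
  have "pc s p = 0 \<or> pc s p = 1 \<or> pc s p = 2 \<or> pc s p = 3 \<or> pc s p = 4 \<or> pc s p \<ge> 5" by auto
  then show ?thesis
  proof (elim disjE)
    assume h: "pc s p = 0"
    have e: "s' = s\<lparr> reg := (reg s)(p := Some (vp p)), pc := (pc s)(p := 1) \<rparr>"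
      unfolding s'_def alg_step_def using h pij by (auto simp: numeral_eq_Suc)
    show ?thesis using I1 I2 G h ij' unfolding e P_def W_def by auto
  next
    assume h: "pc s p = 1"
    have e: "s' = s\<lparr> pc := (pc s)(p := 2) \<rparr>"
      unfolding s'_def alg_step_def using h pij by (auto simp: numeral_eq_Suc)
    show ?thesis using I1 I2 G h ij' unfolding e P_def W_def by auto
  next
    assume h: "pc s p = 2"
    have G': "ost s = S \<and> pc s q \<le> 2 \<or> W s q p" using G h unfolding W_def by auto
    then show ?thesis
    proof
      assume g: "ost s = S \<and> pc s q \<le> 2"
      have e: "s' = s\<lparr> ost := ost s @ [opr p],
                   res := (res s)(p := Some (ACK (exec (ost s) (opr p) p))),
                   pc := (pc s)(p := 3) \<rparr>"
        unfolding s'_def alg_step_def using h pij g v by (auto simp: numeral_eq_Suc)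
      show ?thesis using I1 I2 g h ij' unfolding e P_def W_def by auto
    next
      assume g: "W s q p"
      have e: "s' = s\<lparr> res := (res s)(p := Some NACK), pc := (pc s)(p := 3) \<rparr>"
        unfolding s'_def alg_step_def using h pij g n by (auto simp: numeral_eq_Suc W_def)
      show ?thesis using I1 I2 g h ij' unfolding e P_def W_def by auto
    qed
  next
    assume h: "pc s p = 3"
    have "(\<exists>r. res s p = Some (ACK r)) \<or> res s p = Some NACK" using I1 h unfolding P_def
      by (cases "res s p") (auto elim: resp.exhaust[of "the (res s p)"], metis resp.exhaust)
    then show ?thesis
    proof
      assume "\<exists>r. res s p = Some (ACK r)"
      then obtain r where r: "res s p = Some (ACK r)" by blast
      have e: "s' = s\<lparr> dec := (dec s)(p := Some (Some (vp p))), pc := (pc s)(p := 5) \<rparr>"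
        unfolding s'_def alg_step_def using h pij r by (auto simp: numeral_eq_Suc)
      show ?thesis using I1 I2 G h r ij' unfolding e P_def W_def by auto
    next
      assume r: "res s p = Some NACK"
      have e: "s' = s\<lparr> pc := (pc s)(p := 4) \<rparr>"
        unfolding s'_def alg_step_def using h pij r by (auto simp: numeral_eq_Suc)
      show ?thesis using I1 I2 G h r ij' unfolding e P_def W_def by auto
    qed
  next
    assume h: "pc s p = 4"
    have e: "s' = s\<lparr> dec := (dec s)(p := Some (reg s q)), pc := (pc s)(p := 5) \<rparr>"
      unfolding s'_def alg_step_def using h pij oth by (auto simp: numeral_eq_Suc)
    have r: "res s p = Some NACK" using I1 h unfolding P_def by simp
    have wq: "W s q p" using G h r unfolding W_def by auto
    have rq: "reg s q = Some (vp q)" using wq I2 unfolding W_def P_def by auto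
    show ?thesis using I1 I2 G h r rq ij' unfolding e P_def W_def by auto
  next
    assume h: "pc s p \<ge> 5"
    have "pc s p = 5" using h I1 unfolding P_def by simp
    then have "s' = s" using pij by (simp add: s'_def alg_step_def numeral_eq_Suc)
    then show ?thesis using I1 I2 G by simp
  qed
qed

lemma Inv_step:
  assumes I: "Inv s"
  shows "Inv (alg_step valid exec i j vp opr p s)"
proof (cases "p = i \<or> p = j")
  case False
  then show ?thesis using I by (simp add: alg_step_def)
next
  case True
  then show ?thesis
  proof
    assume "p = i"
    then show ?thesis using step_gen[of i j s] I ij vi ni unfolding Inv_def
      by (auto simp: other_def)
  next
    assume "p = j"
    then show ?thesis using step_gen[of j i s] I ij vj nj unfolding Inv_def
      by (auto simp: other_def)
  qed
qed

lemma Inv_run: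
  assumes "is_run valid exec S i j vp opr sch \<sigma>"
  shows "Inv (\<sigma> n)"
proof (induction n)
  case 0
  then show ?case using assms Inv_init by (simp add: is_run_def)
next
  case (Suc n)
  then show ?case using assms Inv_step by (simp add: is_run_def)
qed

lemma step_cases:
  assumes qij: "q = i \<or> q = j"
  obtains (c0) "pc s q = 0" "alg_step valid exec i j vp opr q s = s\<lparr> reg := (reg s)(q := Some (vp q)), pc := (pc s)(q := 1) \<rparr>"
  | (c1) "pc s q = 1" "alg_step valid exec i j vp opr q s = s\<lparr> pc := (pc s)(q := 2) \<rparr>"
  | (c2a) "pc s q = 2" "alg_step valid exec i j vp opr q s = s\<lparr> ost := ost s @ [opr q],
                   res := (res s)(q := Some (ACK (exec (ost s) (opr q) q))),
                   pc := (pc s)(q := 3) \<rparr>"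
  | (c2b) "pc s q = 2" "alg_step valid exec i j vp opr q s = s\<lparr> res := (res s)(q := Some NACK), pc := (pc s)(q := 3) \<rparr>"
  | (c3a) "pc s q = 3" "alg_step valid exec i j vp opr q s = s\<lparr> dec := (dec s)(q := Some (Some (vp q))), pc := (pc s)(q := 5) \<rparr>"
  | (c3b) "pc s q = 3" "alg_step valid exec i j vp opr q s = s\<lparr> pc := (pc s)(q := 4) \<rparr>"
  | (c4) "pc s q = 4" "alg_step valid exec i j vp opr q s = s\<lparr> dec := (dec s)(q := Some (reg s (other i j q))), pc := (pc s)(q := 5) \<rparr>"
  | (c5) "pc s q \<ge> 5" "alg_step valid exec i j vp opr q s = s"
proof -
  have pn: "\<not> (q \<noteq> i \<and> q \<noteq> j)" using qij by auto
  have "pc s q = 0 \<or> pc s q = 1 \<or> pc s q = 2 \<or> pc s q = 3 \<or> pc s q = 4 \<or> pc s q \<ge> 5" by auto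
  then show ?thesis
  proof (elim disjE)
    assume h: "pc s q = 0" show ?thesis by (rule c0[OF h]) (simp add: alg_step_def h pn)
  next
    assume h: "pc s q = 1" show ?thesis by (rule c1[OF h]) (simp add: alg_step_def h pn)
  next
    assume h: "pc s q = 2" show ?thesis
    proof (cases "valid (ost s) (opr q) q")
      case True show ?thesis by (rule c2a[OF h]) (simp add: alg_step_def h pn True numeral_eq_Suc)
    next
      case False show ?thesis by (rule c2b[OF h]) (simp add: alg_step_def h pn False numeral_eq_Suc)
    qed
  next
    assume h: "pc s q = 3"
    show ?thesis
    proof (cases "res s q")
      case None show ?thesis by (rule c3b[OF h]) (simp add: alg_step_def h pn None numeral_eq_Suc)
    next
      case (Some x) show ?thesis
      proof (cases x)
        case (ACK r) show ?thesis by (rule c3a[OF h]) (simp add: alg_step_def h pn Some ACK numeral_eq_Suc)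
      next
        case NACK show ?thesis by (rule c3b[OF h]) (simp add: alg_step_def h pn Some NACK numeral_eq_Suc)
      qed
    qed
  next
    assume h: "pc s q = 4" show ?thesis by (rule c4[OF h]) (simp add: alg_step_def h pn numeral_eq_Suc)
  next
    assume h: "pc s q \<ge> 5"
    then obtain k where k: "pc s q = Suc (Suc (Suc (Suc (Suc k))))" using le_Suc_ex[OF h] by (auto simp: numeral_eq_Suc)
    show ?thesis by (rule c5[OF h]) (simp add: alg_step_def k pn)
  qed
qed

lemma pc_other:
  assumes qp: "q \<noteq> p"
  shows "pc (alg_step valid exec i j vp opr q s) p = pc s p \<and>
   dec (alg_step valid exec i j vp opr q s) p = dec s p"
proof (cases "q = i \<or> q = j")
  case True
  from True show ?thesis
    by (rule step_cases[of q s]) (simp_all add: qp not_sym[OF qp])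
next
  case False
  then show ?thesis by (simp add: alg_step_def)
qed

lemma pc_self:
  assumes "p = i \<or> p = j" and lt: "pc s p < 5"
  shows "pc (alg_step valid exec i j vp opr p s) p > pc s p"
  using assms(1) by (rule step_cases[of p s]) (use lt in simp_all)

lemma pc_mono1:
  assumes pij: "p = i \<or> p = j"
  shows "pc s p \<le> pc (alg_step valid exec i j vp opr q s) p"
proof (cases "q = p")
  case True
  from pij show ?thesis unfolding True by (rule step_cases[of p s]) simp_all
next
  case False
  then show ?thesis by (simp add: pc_other)
qed

lemma dec_stable1:
  assumes I: "Inv s" and pij: "p = i \<or> p = j" and d: "dec s p = Some d"
  shows "dec (alg_step valid exec i j vp opr q s) p = Some d"
proof (cases "q = p")
  case True
  obtain q' where "P s p q'" using pij I unfolding Inv_def by blast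
  then have p5: "pc s p = 5" using d unfolding P_def by (metis option.distinct(1) le_neq_implies_less)
  from pij show ?thesis unfolding True
    by (rule step_cases[of p s]) (use p5 d in simp_all)
next
  case False
  then show ?thesis using d by (simp add: pc_other)
qed

lemma dec_done: "Inv s \<Longrightarrow> p = i \<or> p = j \<Longrightarrow> pc s p \<ge> 5 \<Longrightarrow> dec s p \<noteq> None"
  unfolding Inv_def P_def by auto

lemma W_excl: "W s i j \<Longrightarrow> \<not> W s j i" unfolding W_def by auto

lemma dec_val:
  assumes I: "Inv s" and pij: "p = i \<or> p = j" and d: "dec s p = Some d"
  shows "(W s i j \<and> d = Some (vp i)) \<or> (W s j i \<and> d = Some (vp j))"
proof -
  have oth: "other i j i = j" "other i j j = i" using ij by (auto simp: other_def)
  have Pi: "P s i j" and Pj: "P s j i" and G: "(ost s = S \<and> pc s i \<le> 2 \<and> pc s j \<le> 2) \<or> W s i j \<or> W s j i"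
    using I unfolding Inv_def by auto
  obtain q where Pp: "P s p q" and q: "q = other i j p" using pij Pi Pj oth by auto
  have p5: "pc s p = 5" using Pp d unfolding P_def by (metis option.distinct(1) le_neq_implies_less)
  have W: "W s i j \<or> W s j i" using G p5 pij by auto
  have Wij: "W s i j \<Longrightarrow> \<not> W s j i" unfolding W_def by auto
  show ?thesis
  proof (cases "W s i j")
    case True
    then have "\<not> W s j i" using Wij by blast
    show ?thesis
    proof (cases "p = i")
      case True
      then show ?thesis using \<open>W s i j\<close> Pp d unfolding W_def P_def by auto
    next
      case False
      then have "p = j" using pij by auto
      then show ?thesis using \<open>W s i j\<close> Pp d p5 q oth unfolding W_def P_def by auto
    qed
  next
    case False
    then have "W s j i" using W by blast
    show ?thesis
    proof (cases "p = j")
      case True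
      then show ?thesis using \<open>W s j i\<close> False Pp d unfolding W_def P_def by auto
    next
      case F2: False
      then have "p = i" using pij by auto
      then show ?thesis using \<open>W s j i\<close> False Pp d p5 q oth unfolding W_def P_def by auto
    qed
  qed
qed

end

theorem mainTheorem7:
  fixes valid :: "'o list \<Rightarrow> 'o \<Rightarrow> 'p \<Rightarrow> bool"
    and exec :: "'o list \<Rightarrow> 'o \<Rightarrow> 'p \<Rightarrow> 'r"
    and S :: "'o list" and i j :: 'p
    and opr :: "'p \<Rightarrow> 'o" and vp :: "'p \<Rightarrow> 'v"
    and sch :: "nat \<Rightarrow> 'p" and \<sigma> :: "nat \<Rightarrow> ('p, 'v, 'o, 'r) cstate"
  assumes "i \<noteq> j"
    and "opr i \<notin> set S" and "opr j \<notin> set S"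
    and "valid S (opr i) i" and "valid S (opr j) j"
    and "\<not> valid (S @ [opr j]) (opr i) i"
    and "\<not> valid (S @ [opr i]) (opr j) j"
    and "is_run valid exec S i j vp opr sch \<sigma>"
    and "correct sch i \<or> correct sch j"
  shows "(\<forall>p\<in>{i, j}. correct sch p \<longrightarrow> (\<exists>n. dec (\<sigma> n) p \<noteq> None))
       \<and> (\<forall>p\<in>{i, j}. \<forall>q\<in>{i, j}. \<forall>n m d e.
            dec (\<sigma> n) p = Some d \<longrightarrow> dec (\<sigma> m) q = Some e \<longrightarrow> d = e)
       \<and> (\<forall>p\<in>{i, j}. \<forall>n d. dec (\<sigma> n) p = Some d \<longrightarrow> d = Some (vp i) \<or> d = Some (vp j))"
proof -
  note ctx = assms(1,4,5,6,7)
  have run: "is_run valid exec S i j vp opr sch \<sigma>" by fact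
  have stp: "\<And>n. \<sigma> (Suc n) = alg_step valid exec i j vp opr (sch n) (\<sigma> n)"
    using run by (simp add: is_run_def)
  have I: "\<And>n. Inv S i j opr vp (\<sigma> n)" using Inv_run[where valid=valid and S=S and i=i and j=j and opr=opr and vp=vp and exec=exec, OF ctx run] .
  have mono: "\<And>n m p. p = i \<or> p = j \<Longrightarrow> n \<le> m \<Longrightarrow> pc (\<sigma> n) p \<le> pc (\<sigma> m) p"
  proof -
    fix n m :: nat and p assume pij: "p = i \<or> p = j" and nm: "n \<le> m"
    from nm show "pc (\<sigma> n) p \<le> pc (\<sigma> m) p"
    proof (induction m rule: dec_induct)
      case base then show ?case by simp
    next
      case (step k)
      then show ?case using pc_mono1[where valid=valid and S=S and i=i and j=j and opr=opr and vp=vp and exec=exec and s="\<sigma> k" and q="sch k", OF ctx pij] stp[of k] by simp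
    qed
  qed
  have stab: "\<And>n m p d. p = i \<or> p = j \<Longrightarrow> n \<le> m \<Longrightarrow> dec (\<sigma> n) p = Some d \<Longrightarrow> dec (\<sigma> m) p = Some d"
  proof -
    fix n m :: nat and p d assume pij: "p = i \<or> p = j" and nm: "n \<le> m" and d: "dec (\<sigma> n) p = Some d"
    from nm show "dec (\<sigma> m) p = Some d"
    proof (induction m rule: dec_induct)
      case base then show ?case using d by simp
    next
      case (step k)
      then show ?case using dec_stable1[where valid=valid and S=S and i=i and j=j and opr=opr and vp=vp and exec=exec and s="\<sigma> k" and q="sch k" and d=d, OF ctx I[of k] pij] stp[of k] by simp
    qed
  qed
  have dv: "\<And>n p d. p = i \<or> p = j \<Longrightarrow> dec (\<sigma> n) p = Some d \<Longrightarrow>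
      (W S opr (\<sigma> n) i j \<and> d = Some (vp i)) \<or> (W S opr (\<sigma> n) j i \<and> d = Some (vp j))"
    using dec_val[where valid=valid and S=S and i=i and j=j and opr=opr and vp=vp, OF ctx I] by blast
  have Wx: "\<And>s. W S opr s i j \<Longrightarrow> \<not> W S opr s j i" using W_excl[where valid=valid and S=S and i=i and j=j and opr=opr, OF ctx] by blast
  have trm: "\<exists>n. dec (\<sigma> n) p \<noteq> None" if pij: "p = i \<or> p = j" and cp: "correct sch p" for p
  proof -
    have inf: "\<exists>n\<ge>m. sch n = p" for m
    proof (rule ccontr)
      assume "\<not> (\<exists>n\<ge>m. sch n = p)"
      then have "{n. sch n = p} \<subseteq> {..<m}" by (auto simp: not_le)
      then show False using cp unfolding correct_def using finite_subset by blast
    qed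
    have reach: "c \<le> 5 \<Longrightarrow> \<exists>n. pc (\<sigma> n) p \<ge> c" for c
    proof (induction c)
      case 0 then show ?case by simp
    next
      case (Suc c)
      then obtain n where n: "pc (\<sigma> n) p \<ge> c" by auto
      obtain k where k: "k \<ge> n" "sch k = p" using inf by blast
      have ck: "pc (\<sigma> k) p \<ge> c" using mono[OF pij k(1)] n by simp
      show ?case
      proof (cases "pc (\<sigma> k) p \<ge> Suc c")
        case True then show ?thesis by blast
      next
        case False
        then have "pc (\<sigma> k) p < 5" using ck Suc.prems by simp
        then have "pc (\<sigma> (Suc k)) p > pc (\<sigma> k) p"
          using pc_self[where valid=valid and S=S and i=i and j=j and opr=opr and vp=vp and exec=exec and s="\<sigma> k", OF ctx pij] stp[of k] k(2) by simp
        then show ?thesis using ck by (intro exI[of _ "Suc k"]) simp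
      qed
    qed
    obtain n where "pc (\<sigma> n) p \<ge> 5" using reach[of 5] by auto
    then show ?thesis using dec_done[where valid=valid and S=S and i=i and j=j and opr=opr and vp=vp, OF ctx I[of n] pij] by blast
  qed
  show ?thesis
  proof (intro conjI ballI allI impI)
    fix p assume "p \<in> {i, j}" "correct sch p"
    then show "\<exists>n. dec (\<sigma> n) p \<noteq> None" using trm by auto
  next
    fix p q n m d e assume p: "p \<in> {i, j}" and q: "q \<in> {i, j}"
      and d: "dec (\<sigma> n) p = Some d" and e: "dec (\<sigma> m) q = Some e"
    define N where "N = max n m"
    have d': "dec (\<sigma> N) p = Some d" using stab[OF _ _ d] p unfolding N_def by auto
    have e': "dec (\<sigma> N) q = Some e" using stab[OF _ _ e] q unfolding N_def by auto
    show "d = e" using dv[OF _ d'] dv[OF _ e'] p q Wx by blast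
  next
    fix p n d assume p: "p \<in> {i, j}" and d: "dec (\<sigma> n) p = Some d"
    show "d = Some (vp i) \<or> d = Some (vp j)" using dv[OF _ d] p by blast
  qed
qed

end
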